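(* For integers $s,t\ge0$ let $m_{i,j}^{s,t}=\int_{(0,1)^2}\frac{x^{s+i}y^{s+j}}{x+y}\left(\frac{1-x}{1+x}\right)^t\left(\frac{1-y}{1+y}\right)^tdx\,dy$, $\phi_i^{s,t}=\sqrt2\int_0^1\frac{x^{s+i}}{1+x}\left(\frac{1-x}{1+x}\right)^tdx$, $\tau_n^{s,t}=\det(m_{i,j}^{s,t})_{i,j=0}^{n-1}$ ($\tau_0^{s,t}=1$), $$\sigma_n^{s,t}=\det\begin{pmatrix} m_{0,0}^{s,t}&\cdots&m_{0,n-1}^{s,t}&\phi_0^{s,t}\\ \vdots&&\vdots&\vdots\\ m_{n,0}^{s,t}&\cdots&m_{n,n-1}^{s,t}&\phi_n^{s,t}\end{pmatrix}\ (n\ge0),\qquad P_n^{s,t}(x)=\frac{1}{\tau_n^{s,t}}\det\begin{pmatrix} m_{0,0}^{s,t}&\cdots&m_{0,n-1}^{s,t}&1\\ \vdots&&\vdots&\vdots\\ m_{n,0}^{s,t}&\cdots&m_{n,n-1}^{s,t}&x^n\end{pmatrix},$$ $P_0^{s,t}=1$, and for $n\ge1$ with $\sigma_{n-1}^{s,t}\ne0$, $$R_n^{s,t}(x)=\frac{(-1)^{n-1}}{\sigma_{n-1}^{s,t}}\det\begin{pmatrix}\phi_0^{s,t}&m_{0,0}^{s,t}&\cdots&m_{0,n-2}^{s,t}&1\\ \phi_1^{s,t}&m_{1,0}^{s,t}&\cdots&m_{1,n-2}^{s,t}&x\\ \vdots&\vdots&&\vdots&\vdots\\ \phi_n^{s,t}&m_{n,0}^{s,t}&\cdots&m_{n,n-2}^{s,t}&x^n\end{pmatrix}.$$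 Then for every $n\ge1$ and $s,t\ge0$ with $\sigma_{n-1}^{s,t}\ne0$, $$P_n^{s,t+1}(x)=R_n^{s,t}(x)-d_n^{s,t}P_{n-1}^{s,t+1}(x),\qquad d_n^{s,t}=-\frac{\sigma_n^{s,t}\tau_{n-1}^{s,t+1}}{\sigma_{n-1}^{s,t}\tau_n^{s,t+1}}.$$
   Context: $m_{i,j}^{s,t}=\langle x^i,y^j\rangle_{s,t}$ for the bilinear form $\langle f,g\rangle_{s,t}=\int_{(0,1)^2}\frac{x^sy^s}{x+y}f(x)g(y)\left(\frac{1-x}{1+x}\right)^t\left(\frac{1-y}{1+y}\right)^tdx\,dy$, and $\phi_i^{s,t}=\mathcal L_{s,t}(x^i)$ with $\mathcal L_{s,t}(f)=\sqrt2\int_0^1\frac{x^s}{1+x}f(x)\left(\frac{1-x}{1+x}\right)^tdx$. The determinants $\tau_n^{s,t}$ are positive. The condition $\sigma_{n-1}^{s,t}\neq 0$ is only what is needed for $R_n^{s,t}$ and $d_n^{s,t}$ to be defined. *)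

theory Defs
  imports "HOL-Analysis.Analysis" "Jordan_Normal_Form.Determinant"
begin

definition mmom :: "nat \<Rightarrow> nat \<Rightarrow> nat \<Rightarrow> nat \<Rightarrow> real" where
  "mmom s t i j = (LINT p:{0<..<1::real} \<times> {0<..<1::real}|lborel.
     (fst p ^ (s + i) * snd p ^ (s + j) / (fst p + snd p)) *
     ((1 - fst p) / (1 + fst p)) ^ t * ((1 - snd p) / (1 + snd p)) ^ t)"

definition phi :: "nat \<Rightarrow> nat \<Rightarrow> nat \<Rightarrow> real" where
  "phi s t i = sqrt 2 * (LINT x:{0<..<1::real}|lborel.
     x ^ (s + i) / (1 + x) * ((1 - x) / (1 + x)) ^ t)"

definition tau :: "nat \<Rightarrow> nat \<Rightarrow> nat \<Rightarrow> real" where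
  "tau s t n = Determinant.det (Matrix.mat n n (\<lambda>(i, j). mmom s t i j))"

definition sigma :: "nat \<Rightarrow> nat \<Rightarrow> nat \<Rightarrow> real" where
  "sigma s t n = Determinant.det (Matrix.mat (n + 1) (n + 1)
     (\<lambda>(i, j). if j < n then mmom s t i j else phi s t i))"

definition Ppoly :: "nat \<Rightarrow> nat \<Rightarrow> nat \<Rightarrow> real \<Rightarrow> real" where
  "Ppoly s t n x = Determinant.det (Matrix.mat (n + 1) (n + 1)
     (\<lambda>(i, j). if j < n then mmom s t i j else x ^ i)) / tau s t n"

definition Rpoly :: "nat \<Rightarrow> nat \<Rightarrow> nat \<Rightarrow> real \<Rightarrow> real" where
  "Rpoly s t n x = (-1) ^ (n - 1) / sigma s t (n - 1) *
     Determinant.det (Matrix.mat (n + 1) (n + 1)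
     (\<lambda>(i, j). if j = 0 then phi s t i else if j < n then mmom s t i (j - 1) else x ^ i))"

definition dcoef :: "nat \<Rightarrow> nat \<Rightarrow> nat \<Rightarrow> real" where
  "dcoef s t n = - (sigma s t n * tau s (t + 1) (n - 1)) / (sigma s t (n - 1) * tau s (t + 1) n)"

end

theory Submission
  imports Defs "HOL-Probability.Sinc_Integral"
begin

lemma mat_cong_real: "(\<And>i j. i < nr \<Longrightarrow> j < nc \<Longrightarrow> f (i,j) = g (i,j)) \<Longrightarrow> Matrix.mat nr nc f = Matrix.mat nr nc g"
  by (rule eq_matI) auto

lemma det_rep_cols:
  fixes f :: "nat \<times> nat \<Rightarrow> real"
  assumes "j < N" "j' < N" "j \<noteq> j'" "\<And>i. i < N \<Longrightarrow> f (i,j) = f (i,j')"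
  shows "Determinant.det (Matrix.mat N N f) = 0"
  by (rule det_identical_columns[of _ N j j']) (use assms in \<open>auto intro!: eq_vecI\<close>)

definition cofa :: "nat \<Rightarrow> (nat \<Rightarrow> nat \<Rightarrow> real) \<Rightarrow> nat \<Rightarrow> real" where
  "cofa k a i = (-1)^(i+k) * Determinant.det (Matrix.mat k k (\<lambda>(i',j'). a (if i' < i then i' else Suc i') j'))"

lemma det_lastcol:
  fixes f :: "nat \<times> nat \<Rightarrow> real"
  shows "Determinant.det (Matrix.mat (Suc k) (Suc k) f) =
    (\<Sum>i<Suc k. f (i,k) * ((-1)^(i+k) * Determinant.det (Matrix.mat k k (\<lambda>(i',j'). f (if i' < i then i' else Suc i', j')))))"
proof -
  have "Determinant.det (Matrix.mat (Suc k) (Suc k) f) = (\<Sum>i<Suc k. Matrix.mat (Suc k) (Suc k) f $$ (i,k) * cofactor (Matrix.mat (Suc k) (Suc k) f) i k)"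
    by (rule laplace_expansion_column) auto
  also have "\<dots> = (\<Sum>i<Suc k. f (i,k) * ((-1)^(i+k) * Determinant.det (Matrix.mat k k (\<lambda>(i',j'). f (if i' < i then i' else Suc i', j')))))"
  proof (rule sum.cong[OF refl])
    fix i assume i: "i \<in> {..<Suc k}"
    have "mat_delete (Matrix.mat (Suc k) (Suc k) f) i k = Matrix.mat k k (\<lambda>(i',j'). f (if i' < i then i' else Suc i', j'))"
      unfolding mat_delete_def by (rule eq_matI) auto
    then show "Matrix.mat (Suc k) (Suc k) f $$ (i,k) * cofactor (Matrix.mat (Suc k) (Suc k) f) i k = f (i,k) * ((-1)^(i+k) * Determinant.det (Matrix.mat k k (\<lambda>(i',j'). f (if i' < i then i' else Suc i', j'))))"
      using i unfolding cofactor_def by auto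
  qed
  finally show ?thesis .
qed

lemma det_lastcol_lin:
  "Determinant.det (Matrix.mat (Suc k) (Suc k) (\<lambda>(i,j). if j < k then a i j else v i)) = (\<Sum>i<Suc k. v i * cofa k a i)"
proof -
  have "Determinant.det (Matrix.mat (Suc k) (Suc k) (\<lambda>(i,j). if j < k then a i j else v i)) =
    (\<Sum>i<Suc k. v i * ((-1)^(i+k) * Determinant.det (Matrix.mat k k (\<lambda>(i',j'). if j' < k then a (if i' < i then i' else Suc i') j' else v (if i' < i then i' else Suc i')))))"
    by (subst det_lastcol) simp
  also have "\<dots> = (\<Sum>i<Suc k. v i * cofa k a i)"
    unfolding cofa_def by (intro sum.cong refl arg_cong2[where f="(*)"] arg_cong[where f=Determinant.det] mat_cong_real) auto
  finally show ?thesis .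
qed

lemma det_unitcol:
  fixes f :: "nat \<times> nat \<Rightarrow> real"
  assumes "\<And>i. i < Suc k \<Longrightarrow> f (i,k) = (if i = k then 1 else 0)"
  shows "Determinant.det (Matrix.mat (Suc k) (Suc k) f) = Determinant.det (Matrix.mat k k f)"
proof -
  have "Determinant.det (Matrix.mat (Suc k) (Suc k) f) = (\<Sum>i<Suc k. f (i,k) * ((-1)^(i+k) * Determinant.det (Matrix.mat k k (\<lambda>(i',j'). f (if i' < i then i' else Suc i', j')))))"
    by (rule det_lastcol)
  also have "\<dots> = (\<Sum>i\<in>{k}. f (i,k) * ((-1)^(i+k) * Determinant.det (Matrix.mat k k (\<lambda>(i',j'). f (if i' < i then i' else Suc i', j')))))"
    by (rule sum.mono_neutral_right) (auto simp: assms)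
  also have "\<dots> = Determinant.det (Matrix.mat k k (\<lambda>(i',j'). f (if i' < k then i' else Suc i', j')))"
    using assms[of k] by (simp add: power_add[symmetric] flip: mult_2)
  also have "\<dots> = Determinant.det (Matrix.mat k k f)"
    by (intro arg_cong[where f=Determinant.det] mat_cong_real) auto
  finally show ?thesis .
qed

lemma det_zerocol:
  fixes f :: "nat \<times> nat \<Rightarrow> real"
  assumes "\<And>i. i < Suc k \<Longrightarrow> f (i,k) = 0"
  shows "Determinant.det (Matrix.mat (Suc k) (Suc k) f) = 0"
  by (subst det_lastcol) (simp add: assms)

lemma det_firstcol:
  fixes f :: "nat \<times> nat \<Rightarrow> real"
  shows "Determinant.det (Matrix.mat (Suc k) (Suc k) f) =
    (\<Sum>i<Suc k. f (i,0) * ((-1)^i * Determinant.det (Matrix.mat k k (\<lambda>(i',j'). f (if i' < i then i' else Suc i', Suc j')))))"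
proof -
  have "Determinant.det (Matrix.mat (Suc k) (Suc k) f) = (\<Sum>i<Suc k. Matrix.mat (Suc k) (Suc k) f $$ (i,0) * cofactor (Matrix.mat (Suc k) (Suc k) f) i 0)"
    by (rule laplace_expansion_column) auto
  also have "\<dots> = (\<Sum>i<Suc k. f (i,0) * ((-1)^i * Determinant.det (Matrix.mat k k (\<lambda>(i',j'). f (if i' < i then i' else Suc i', Suc j')))))"
  proof (rule sum.cong[OF refl])
    fix i assume i: "i \<in> {..<Suc k}"
    have "mat_delete (Matrix.mat (Suc k) (Suc k) f) i 0 = Matrix.mat k k (\<lambda>(i',j'). f (if i' < i then i' else Suc i', Suc j'))"
      unfolding mat_delete_def by (rule eq_matI) auto
    then show "Matrix.mat (Suc k) (Suc k) f $$ (i,0) * cofactor (Matrix.mat (Suc k) (Suc k) f) i 0 = f (i,0) * ((-1)^i * Determinant.det (Matrix.mat k k (\<lambda>(i',j'). f (if i' < i then i' else Suc i', Suc j'))))"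
      using i unfolding cofactor_def by auto
  qed
  finally show ?thesis .
qed

lemma det_rotate:
  fixes g h :: "nat \<times> nat \<Rightarrow> real"
  assumes "\<And>i. i < Suc k \<Longrightarrow> g (i,0) = h (i,k)"
    and "\<And>i j. i < Suc k \<Longrightarrow> j < k \<Longrightarrow> g (i,Suc j) = h (i,j)"
  shows "Determinant.det (Matrix.mat (Suc k) (Suc k) g) = (-1)^k * Determinant.det (Matrix.mat (Suc k) (Suc k) h)"
proof -
  have "Determinant.det (Matrix.mat (Suc k) (Suc k) g) = (\<Sum>i<Suc k. g (i,0) * ((-1)^i * Determinant.det (Matrix.mat k k (\<lambda>(i',j'). g (if i' < i then i' else Suc i', Suc j')))))"
    by (rule det_firstcol)
  also have "\<dots> = (\<Sum>i<Suc k. (-1)^k * (h (i,k) * ((-1)^(i+k) * Determinant.det (Matrix.mat k k (\<lambda>(i',j'). h (if i' < i then i' else Suc i', j'))))))"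
  proof (rule sum.cong[OF refl])
    fix i assume i: "i \<in> {..<Suc k}"
    have "Matrix.mat k k (\<lambda>(i',j'). g (if i' < i then i' else Suc i', Suc j')) = Matrix.mat k k (\<lambda>(i',j'). h (if i' < i then i' else Suc i', j'))"
      by (rule mat_cong_real) (use i in \<open>auto intro!: assms(2)\<close>)
    moreover have "(-1::real)^i = (-1)^k * (-1)^(i+k)"
    proof -
      have kk: "(-1::real)^k * (-1)^k = 1"
        by (simp add: power_add[symmetric] mult_2[symmetric] power_mult)
      have "(-1::real)^k * (-1)^(i+k) = (-1)^i * ((-1)^k * (-1)^k)"
        by (simp add: power_add)
      then show ?thesis using kk by simp
    qed
    ultimately show "g (i,0) * ((-1)^i * Determinant.det (Matrix.mat k k (\<lambda>(i',j'). g (if i' < i then i' else Suc i', Suc j')))) = (-1)^k * (h (i,k) * ((-1)^(i+k) * Determinant.det (Matrix.mat k k (\<lambda>(i',j'). h (if i' < i then i' else Suc i', j')))))"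
      using assms(1) i by simp
  qed
  also have "\<dots> = (-1)^k * Determinant.det (Matrix.mat (Suc k) (Suc k) h)"
    by (subst det_lastcol) (simp only: sum_distrib_left)
  finally show ?thesis .
qed

lemma lin_vanish:
  fixes g :: "nat \<Rightarrow> real" and Bf :: "nat \<times> nat \<Rightarrow> real"
  assumes detB: "Determinant.det (Matrix.mat N N Bf) \<noteq> 0"
    and van: "\<And>j. j < N \<Longrightarrow> (\<Sum>i<N. Bf (i,j) * g i) = 0"
    and i: "i < N"
  shows "g i = 0"
proof -
  let ?B = "Matrix.mat N N Bf"
  have Bc: "?B \<in> carrier_mat N N" by simp
  have BT: "transpose_mat ?B \<in> carrier_mat N N" by simp
  have dT: "Determinant.det (transpose_mat ?B) \<noteq> 0" using det_transpose[OF Bc] detB by simp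
  have "transpose_mat ?B *\<^sub>v vec N g = 0\<^sub>v N"
  proof (rule eq_vecI)
    fix j assume j: "j < dim_vec (0\<^sub>v N :: real vec)"
    then have jN: "j < N" by simp
    have "(transpose_mat ?B *\<^sub>v vec N g) $ j = (\<Sum>i\<in>{0..<N}. Bf (i,j) * g i)"
      using jN by (simp add: mult_mat_vec_def scalar_prod_def row_def)
    also have "\<dots> = 0" using van[OF jN] by (simp add: atLeast0LessThan)
    finally show "(transpose_mat ?B *\<^sub>v vec N g) $ j = 0\<^sub>v N $ j" using jN by simp
  qed simp
  moreover have "vec N g \<in> carrier_vec N" by simp
  ultimately have "vec N g = 0\<^sub>v N"
    using det_0_iff_vec_prod_zero_field[OF BT] dT by blast
  then show ?thesis using i by (metis index_vec index_zero_vec(1))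
qed

lemma pluecker:
  fixes c :: "nat \<Rightarrow> nat \<Rightarrow> real" and \<phi> v :: "nat \<Rightarrow> real"
  assumes n: "n = Suc k"
  defines "Dn \<equiv> \<lambda>w. Determinant.det (Matrix.mat (Suc n) (Suc n) (\<lambda>(i,j). if j < n then c i j else w i))"
    and "Dm \<equiv> \<lambda>w. Determinant.det (Matrix.mat n n (\<lambda>(i,j). if j < k then c i j else w i))"
    and "En \<equiv> \<lambda>w. Determinant.det (Matrix.mat (Suc n) (Suc n) (\<lambda>(i,j). if j < n then (if j = 0 then \<phi> i else c i (j - 1)) else w i))"
    and "T \<equiv> Determinant.det (Matrix.mat n n (\<lambda>(i,j). c i j))"
  assumes S1: "Dm \<phi> \<noteq> 0"
  shows "Dm \<phi> * Dn v = (-1)^k * T * En v + Dn \<phi> * Dm v"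
proof -
  define ae where "ae = (\<lambda>i j. if j = 0 then \<phi> i else c i (j - 1))"
  have Dn_lin: "Dn w = (\<Sum>i<Suc n. w i * cofa n c i)" for w
    unfolding Dn_def by (rule det_lastcol_lin)
  have En_lin: "En w = (\<Sum>i<Suc n. w i * cofa n ae i)" for w
    unfolding En_def ae_def by (rule det_lastcol_lin)
  have Dm_lin: "Dm w = (\<Sum>i<Suc n. w i * (if i < n then cofa k c i else 0))" for w
  proof -
    have "Dm w = (\<Sum>i<Suc k. w i * cofa k c i)"
      unfolding Dm_def n by (rule det_lastcol_lin)
    also have "\<dots> = (\<Sum>i<Suc n. w i * (if i < n then cofa k c i else 0))"
      unfolding n by (simp add: lessThan_Suc)
    finally show ?thesis .
  qed
  define a1 where "a1 = Dm \<phi>"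
  define a2 where "a2 = Dn \<phi>"
  define g where "g = (\<lambda>i. a1 * cofa n c i - (-1)^k * T * cofa n ae i - a2 * (if i < n then cofa k c i else 0))"
  define F where "F = (\<lambda>w. a1 * Dn w - (-1)^k * T * En w - a2 * Dm w)"
  have F_lin: "F w = (\<Sum>i<Suc n. w i * g i)" for w
    unfolding F_def Dn_lin[of w] En_lin[of w] Dm_lin[of w] g_def
    by (simp add: sum_distrib_left sum_subtractf sum.distrib algebra_simps)
  define Bf where "Bf = (\<lambda>(i,j). if j < k then c i j else if j = k then \<phi> i else (if i = n then 1 else (0::real)))"
  have detB: "Determinant.det (Matrix.mat (Suc n) (Suc n) Bf) = Dm \<phi>"
  proof -
    have "Determinant.det (Matrix.mat (Suc n) (Suc n) Bf) = Determinant.det (Matrix.mat n n Bf)"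
      by (rule det_unitcol) (auto simp: Bf_def n)
    also have "\<dots> = Dm \<phi>" unfolding Dm_def
      by (intro arg_cong[where f=Determinant.det] mat_cong_real) (auto simp: Bf_def n)
    finally show ?thesis .
  qed
  have F1: "F (\<lambda>i. c i j) = 0" if j: "j < k" for j
  proof -
    have "Dn (\<lambda>i. c i j) = 0" unfolding Dn_def
      by (rule det_rep_cols[of j _ n]) (use j n in auto)
    moreover have "En (\<lambda>i. c i j) = 0" unfolding En_def
      by (rule det_rep_cols[of "Suc j" _ n]) (use j n in auto)
    moreover have "Dm (\<lambda>i. c i j) = 0" unfolding Dm_def
      by (rule det_rep_cols[of j _ k]) (use j n in auto)
    ultimately show ?thesis unfolding F_def by simp
  qed
  have F2: "F \<phi> = 0"
  proof -
    have "En \<phi> = 0" unfolding En_def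
      by (rule det_rep_cols[of 0 _ n]) (use n in auto)
    then show ?thesis unfolding F_def a1_def a2_def by simp
  qed
  have F3: "F (\<lambda>i. if i = n then 1 else 0) = 0"
  proof -
    have "Dn (\<lambda>i. if i = n then 1 else 0) = Determinant.det (Matrix.mat n n (\<lambda>(i,j). if j < n then c i j else (if i = n then 1 else 0)))"
      unfolding Dn_def by (rule det_unitcol) auto
    also have "\<dots> = T" unfolding T_def
      by (intro arg_cong[where f=Determinant.det] mat_cong_real) auto
    finally have a: "Dn (\<lambda>i. if i = n then 1 else 0) = T" .
    have "En (\<lambda>i. if i = n then 1 else 0) = Determinant.det (Matrix.mat n n (\<lambda>(i,j). if j < n then (if j = 0 then \<phi> i else c i (j - 1)) else (if i = n then 1 else 0)))"
      unfolding En_def by (rule det_unitcol) auto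
    also have "\<dots> = (-1)^k * Dm \<phi>" unfolding Dm_def n
      by (rule det_rotate) auto
    finally have b: "En (\<lambda>i. if i = n then 1 else 0) = (-1)^k * Dm \<phi>" .
    have c: "Dm (\<lambda>i. if i = n then 1 else 0) = 0" unfolding Dm_def n
      by (rule det_zerocol) auto
    have kk: "(-1::real)^k * (-1)^k = 1"
      by (simp add: power_add[symmetric] mult_2[symmetric] power_mult)
    have "(-1)^k * T * ((-1)^k * Dm \<phi>) = ((-1::real)^k * (-1)^k) * T * Dm \<phi>" by simp
    then show ?thesis unfolding F_def a b c a1_def using kk by simp
  qed
  have van: "(\<Sum>i<Suc n. Bf (i,j) * g i) = 0" if j: "j < Suc n" for j
  proof -
    have "(\<Sum>i<Suc n. Bf (i,j) * g i) = F (\<lambda>i. Bf (i,j))" by (simp add: F_lin)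
    also have "\<dots> = 0"
    proof (cases "j < k")
      case True then show ?thesis using F1[OF True] by (simp add: Bf_def)
    next
      case False
      show ?thesis
      proof (cases "j = k")
        case True then show ?thesis using F2 False by (simp add: Bf_def)
      next
        case False2: False
        with False j n have "j = n" by auto
        then show ?thesis using F3 False2 False n by (simp add: Bf_def)
      qed
    qed
    finally show ?thesis .
  qed
  have g0: "g i = 0" if "i < Suc n" for i
    by (rule lin_vanish[OF _ van that]) (use detB S1 in auto)
  have "F v = 0" unfolding F_lin using g0 by simp
  then show ?thesis unfolding F_def a1_def a2_def by simp
qed

lemma meas_ind_cont:
  fixes f :: "'a::euclidean_space \<Rightarrow> real"
  shows "A \<in> sets borel \<Longrightarrow> continuous_on A f \<Longrightarrow> (\<lambda>x. indicator A x * f x) \<in> borel_measurable lborel"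
  using borel_measurable_continuous_on_indicator[of A f] by simp

lemma sets_S: "({0<..<1::real} \<times> {0<..<1::real}) \<in> sets borel"
  by (intro borel_open open_Times) auto

lemma prod_integrable:
  fixes f g :: "real \<Rightarrow> real"
  assumes f: "integrable lborel f" and g: "integrable lborel g"
  shows "integrable lborel (\<lambda>p::real\<times>real. f (fst p) * g (snd p))"
proof -
  have fm: "f \<in> borel_measurable lborel" and gm: "g \<in> borel_measurable lborel"
    using f g by auto
  have "integrable (lborel \<Otimes>\<^sub>M lborel) (\<lambda>p::real\<times>real. f (fst p) * g (snd p))"
  proof (rule lborel_pair.Fubini_integrable)
    show "(\<lambda>p. f (fst p) * g (snd p)) \<in> borel_measurable (lborel \<Otimes>\<^sub>M lborel)"
      by (intro borel_measurable_times measurable_compose[OF measurable_fst fm] measurable_compose[OF measurable_snd gm])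
    have "(\<lambda>x. \<integral>y. norm (f (fst (x, y)) * g (snd (x, y))) \<partial>lborel) = (\<lambda>x. \<bar>f x\<bar> * (\<integral>y. \<bar>g y\<bar> \<partial>lborel))"
      by (simp add: abs_mult)
    moreover have "integrable lborel (\<lambda>x. \<bar>f x\<bar> * (\<integral>y. \<bar>g y\<bar> \<partial>lborel))"
      using f by (intro integrable_mult_left integrable_abs)
    ultimately show "integrable lborel (\<lambda>x. \<integral>y. norm (f (fst (x, y)) * g (snd (x, y))) \<partial>lborel)"
      by simp
    show "AE x in lborel. integrable lborel (\<lambda>y. f (fst (x, y)) * g (snd (x, y)))"
      using g by (intro AE_I2) simp
  qed
  then show ?thesis by (simp add: lborel_prod)
qed

lemma prod_integral:
  fixes f g :: "real \<Rightarrow> real"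
  assumes f: "integrable lborel f" and g: "integrable lborel g"
  shows "integral\<^sup>L lborel (\<lambda>p::real\<times>real. f (fst p) * g (snd p)) = integral\<^sup>L lborel f * integral\<^sup>L lborel g"
proof -
  have i: "integrable (lborel \<Otimes>\<^sub>M lborel) (\<lambda>p::real\<times>real. f (fst p) * g (snd p))"
    using prod_integrable[OF f g] by (simp add: lborel_prod)
  have "integral\<^sup>L lborel (\<lambda>p::real\<times>real. f (fst p) * g (snd p)) = integral\<^sup>L (lborel \<Otimes>\<^sub>M lborel) (\<lambda>p::real\<times>real. f (fst p) * g (snd p))"
    by (simp add: lborel_prod)
  also have "\<dots> = (\<integral>x. (\<integral>y. f (fst (x,y)) * g (snd (x,y)) \<partial>lborel) \<partial>lborel)"
    by (rule lborel_pair.integral_fst'[OF i, symmetric])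
  also have "\<dots> = integral\<^sup>L lborel f * integral\<^sup>L lborel g"
    by simp
  finally show ?thesis .
qed

lemma integrable_inv_sqrt:
  "integrable lborel (\<lambda>x::real. indicator {0<..<1} x * (1 / sqrt x))"
proof -
  have "(\<lambda>x::real. x powr (-1/2)) integrable_on {0<..1}"
    by (rule integrable_on_powr_from_0') auto
  then have "(\<lambda>x::real. x powr (-1/2)) absolutely_integrable_on {0<..1}"
    by (rule nonnegative_absolutely_integrable_1) auto
  then have "set_integrable lebesgue {0<..1} (\<lambda>x::real. x powr (-1/2))" .
  then have "integrable lebesgue (\<lambda>x::real. indicator {0<..1} x * x powr (-1/2))"
    unfolding set_integrable_def by simp
  then have "integrable lborel (\<lambda>x::real. indicator {0<..1} x * x powr (-1/2))"
    by (subst (asm) integrable_completion) auto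
  then show ?thesis
  proof (rule Bochner_Integration.integrable_bound)
    show "(\<lambda>x::real. indicator {0<..<1} x * (1 / sqrt x)) \<in> borel_measurable lborel"
      by (rule meas_ind_cont) (auto intro!: continuous_intros)
    show "AE x in lborel. norm (indicator {0<..<1} x * (1 / sqrt x)) \<le> norm (indicator {0<..1} x * x powr (-1/2) :: real)"
      by (rule AE_I2) (auto simp: indicator_def powr_minus_divide powr_half_sqrt)
  qed
qed

lemma inv_sum_le: "0 < x \<Longrightarrow> 0 < y \<Longrightarrow> 1 / (x + y) \<le> (1 / sqrt x) * (1 / sqrt (y::real))"
proof -
  assume x: "0 < x" and y: "0 < y"
  have "sqrt x * sqrt y \<le> x + y"
  proof -
    have "0 \<le> (sqrt x - sqrt y)^2" by simp
    then have "2 * (sqrt x * sqrt y) \<le> x + y" using x y by (simp add: power2_eq_square algebra_simps)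
    moreover have "0 \<le> sqrt x * sqrt y" using x y by simp
    ultimately show ?thesis by linarith
  qed
  moreover have "0 < sqrt x * sqrt y" using x y by simp
  ultimately show ?thesis by (simp add: divide_simps)
qed

lemma integrable_K:
  "integrable lborel (\<lambda>p::real\<times>real. indicator ({0<..<1} \<times> {0<..<1}) p * (1 / (fst p + snd p)))"
proof (rule Bochner_Integration.integrable_bound)
  show "integrable lborel (\<lambda>p::real\<times>real. (indicator {0<..<1} (fst p) * (1 / sqrt (fst p))) * (indicator {0<..<1} (snd p) * (1 / sqrt (snd p))))"
    by (rule prod_integrable[OF integrable_inv_sqrt integrable_inv_sqrt])
  show "(\<lambda>p::real\<times>real. indicator ({0<..<1} \<times> {0<..<1}) p * (1 / (fst p + snd p))) \<in> borel_measurable lborel"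
    by (rule meas_ind_cont[OF sets_S]) (auto intro!: continuous_intros simp: add_pos_pos)
  show "AE p in lborel. norm (indicator ({0<..<1} \<times> {0<..<1}) p * (1 / (fst p + snd p))) \<le> norm ((indicator {0<..<1} (fst p) * (1 / sqrt (fst p))) * (indicator {0<..<1} (snd p) * (1 / sqrt (snd p)):: real))"
  proof (rule AE_I2)
    fix p :: "real \<times> real"
    obtain x y where p: "p = (x,y)" by (cases p)
    show "norm (indicator ({0<..<1} \<times> {0<..<1}) p * (1 / (fst p + snd p))) \<le> norm ((indicator {0<..<1} (fst p) * (1 / sqrt (fst p))) * (indicator {0<..<1} (snd p) * (1 / sqrt (snd p)):: real))"
      using inv_sum_le[of x y] unfolding p by (auto simp: indicator_def)
  qed
qed

lemma meas_pair:
  fixes f :: "real \<times> real \<Rightarrow> real"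
  shows "f \<in> borel_measurable (borel \<Otimes>\<^sub>M borel) \<Longrightarrow> f \<in> borel_measurable lborel"
  by (simp add: borel_prod)

lemma integrable_kernel:
  fixes u v :: "real \<Rightarrow> real"
  assumes um[measurable]: "u \<in> borel_measurable borel" and vm[measurable]: "v \<in> borel_measurable borel"
    and ub: "\<And>x. x \<in> {0<..<1} \<Longrightarrow> \<bar>u x\<bar> \<le> C" and vb: "\<And>y. y \<in> {0<..<1} \<Longrightarrow> \<bar>v y\<bar> \<le> D"
  shows "integrable lborel (\<lambda>p::real\<times>real. indicator ({0<..<1} \<times> {0<..<1}) p * (u (fst p) * v (snd p) / (fst p + snd p)))"
proof (rule Bochner_Integration.integrable_bound)
  show "integrable lborel (\<lambda>p::real\<times>real. (C * D) * (indicator ({0<..<1} \<times> {0<..<1}) p * (1 / (fst p + snd p))))"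
    by (rule integrable_mult_right[OF integrable_K])
  have [measurable]: "({0<..<1::real} \<times> {0<..<1::real}) \<in> sets (borel \<Otimes>\<^sub>M borel)"
    using sets_S by (simp add: borel_prod)
  show "(\<lambda>p::real\<times>real. indicator ({0<..<1} \<times> {0<..<1}) p * (u (fst p) * v (snd p) / (fst p + snd p))) \<in> borel_measurable lborel"
    by (rule meas_pair) measurable
  show "AE p in lborel. norm (indicator ({0<..<1} \<times> {0<..<1}) p * (u (fst p) * v (snd p) / (fst p + snd p))) \<le> norm ((C * D) * (indicator ({0<..<1} \<times> {0<..<1}) p * (1 / (fst p + snd p))) :: real)"
  proof (rule AE_I2)
    fix p :: "real \<times> real"
    obtain x y where p: "p = (x,y)" by (cases p)
    show "norm (indicator ({0<..<1} \<times> {0<..<1}) p * (u (fst p) * v (snd p) / (fst p + snd p))) \<le> norm ((C * D) * (indicator ({0<..<1} \<times> {0<..<1}) p * (1 / (fst p + snd p))) :: real)"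
    proof (cases "x \<in> {0<..<1} \<and> y \<in> {0<..<1}")
      case True
      have "\<bar>u x * v y\<bar> \<le> C * D"
        unfolding abs_mult by (rule mult_mono) (use ub vb True in \<open>auto intro: order_trans[OF abs_ge_zero]\<close>)
      moreover have "0 < x + y" using True by auto
      moreover have "0 \<le> C" using ub[of x] True by auto
      moreover have "0 \<le> D" using vb[of y] True by auto
      ultimately show ?thesis using True unfolding p by (auto simp: abs_mult divide_simps)
    qed (auto simp: p indicator_def)
  qed
qed

lemma int_I_cont:
  fixes f :: "real \<Rightarrow> real"
  assumes "continuous_on {0..1} f"
  shows "integrable lborel (\<lambda>x. indicator {0<..<1} x * f x)"
proof -
  have "set_integrable lborel {0..1} f" by (rule borel_integrable_atLeastAtMost'[OF assms])
  then have "set_integrable lborel {0<..<1} f" by (rule set_integrable_subset) auto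
  then show ?thesis unfolding set_integrable_def by simp
qed

lemma mmom_integral: "mmom s t i j = integral\<^sup>L lborel (\<lambda>p::real\<times>real. indicator ({0<..<1} \<times> {0<..<1}) p *
   ((fst p ^ (s + i) / (1 + fst p) * ((1 - fst p) / (1 + fst p)) ^ t * (1 + fst p)) * (snd p ^ (s + j) / (1 + snd p) * ((1 - snd p) / (1 + snd p)) ^ t * (1 + snd p)) / (fst p + snd p)))"
  unfolding mmom_def set_lebesgue_integral_def
  by (intro Bochner_Integration.integral_cong refl) (auto simp: indicator_def)

lemma phi_integral: "phi s t i = sqrt 2 * integral\<^sup>L lborel (\<lambda>x. indicator {0<..<1} x * (x ^ (s + i) / (1 + x) * ((1 - x) / (1 + x)) ^ t))"
  unfolding phi_def set_lebesgue_integral_def by simp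

lemma mmom_rec: "mmom s (t+1) i j = mmom s t i j - phi s t i * phi s t j"
proof -
  define w where "w = (\<lambda>x::real. (1 - x) / (1 + x))"
  define u where "u = (\<lambda>a x::real. x ^ a / (1 + x) * w x ^ t)"
  define S where "S = ({0<..<1::real} \<times> {0<..<1::real})"
  let ?a = "s + i" and ?b = "s + j"
  define F0 where "F0 = (\<lambda>p::real\<times>real. indicator S p * ((u ?a (fst p) * (1 + fst p)) * (u ?b (snd p) * (1 + snd p)) / (fst p + snd p)))"
  define F1 where "F1 = (\<lambda>p::real\<times>real. indicator S p * ((u ?a (fst p) * (1 + fst p) * w (fst p)) * (u ?b (snd p) * (1 + snd p) * w (snd p)) / (fst p + snd p)))"
  define G where "G = (\<lambda>p::real\<times>real. (indicator {0<..<1} (fst p) * u ?a (fst p)) * (indicator {0<..<1} (snd p) * u ?b (snd p)))"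
  have cu: "continuous_on {0..1} (u a)" for a
    unfolding u_def w_def by (intro continuous_intros) auto
  have iu: "integrable lborel (\<lambda>x. indicator {0<..<1} x * u a x)" for a
    by (rule int_I_cont[OF cu])
  have mu: "(\<lambda>x. u a x * (1 + x) * c x) \<in> borel_measurable borel" if "c \<in> borel_measurable borel" for a c
    using that unfolding u_def w_def by measurable
  have bu: "\<bar>u a x * (1 + x)\<bar> \<le> 1" if "x \<in> {0<..<1}" for a x
  proof -
    have "\<bar>u a x * (1 + x)\<bar> = x ^ a * w x ^ t" using that unfolding u_def w_def by (auto simp: abs_mult)
    also have "\<dots> \<le> 1 * 1" using that unfolding w_def
      by (intro mult_mono power_le_one) (auto simp: divide_simps)
    finally show ?thesis by simp
  qed
  have bw: "\<bar>w x\<bar> \<le> 1" if "x \<in> {0<..<1}" for x using that unfolding w_def by (auto simp: divide_simps)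
  have iF0: "integrable lborel F0" unfolding F0_def S_def
    by (rule integrable_kernel[where C=1 and D=1]) (use mu[of "\<lambda>x. 1"] bu in auto)
  have iG: "integrable lborel G" unfolding G_def by (rule prod_integrable[OF iu iu])
  have eq: "F1 p = F0 p - 2 * G p" for p
  proof (cases "p \<in> S")
    case True
    obtain x y where p: "p = (x,y)" by (cases p)
    have x: "0 < x" "x < 1" and y: "0 < y" "y < 1" using True by (auto simp: p S_def)
    have key: "U * (1 - x) * (V * (1 - y)) / (x + y)
        = U * (1 + x) * (V * (1 + y)) / (x + y) - 2 * (U * V)" for U V
    proof -
      have "U * (1 - x) * (V * (1 - y)) / (x + y) = U * V * ((1 - x) * (1 - y)) / (x + y)"
        by (simp add: ac_simps)
      also have "(1 - x) * (1 - y) = (1 + x) * (1 + y) - 2 * (x + y)" by (simp add: algebra_simps)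
      also have "U * V * ((1 + x) * (1 + y) - 2 * (x + y)) / (x + y) = U * V * ((1 + x) * (1 + y)) / (x + y) - 2 * (U * V)"
      proof -
        have "x + y \<noteq> 0" using x y by simp
        then have "U * V * (2 * (x + y)) / (x + y) = 2 * (U * V)"
          by (metis mult.assoc mult.commute nonzero_mult_div_cancel_right)
        then show ?thesis by (simp add: right_diff_distrib diff_divide_distrib)
      qed
      finally show ?thesis by (simp add: ac_simps)
    qed
    show ?thesis using True x y unfolding F0_def F1_def G_def p
      by (simp add: S_def indicator_def key w_def)
  qed (auto simp: F0_def F1_def G_def S_def indicator_def mem_Times_iff)
  have m0: "mmom s t i j = integral\<^sup>L lborel F0"
    unfolding mmom_integral F0_def u_def w_def S_def by simp
  have m1: "mmom s (t+1) i j = integral\<^sup>L lborel F1"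
    unfolding mmom_integral F1_def u_def w_def S_def
    by (intro Bochner_Integration.integral_cong refl) (simp add: field_simps)
  have GG: "integral\<^sup>L lborel G = integral\<^sup>L lborel (\<lambda>x. indicator {0<..<1} x * u ?a x) * integral\<^sup>L lborel (\<lambda>x. indicator {0<..<1} x * u ?b x)"
    unfolding G_def by (rule prod_integral[OF iu iu])
  have pG: "phi s t i * phi s t j = 2 * integral\<^sup>L lborel G"
    unfolding GG phi_integral u_def w_def by simp
  have "integral\<^sup>L lborel F1 = integral\<^sup>L lborel F0 - 2 * integral\<^sup>L lborel G"
    unfolding eq using iF0 iG by simp
  then show ?thesis using m0 m1 pG by simp
qed

lemma ae_cont_zero:
  fixes g :: "real \<Rightarrow> real"
  assumes ae: "AE x in lborel. x \<in> U \<longrightarrow> g x = 0" and U: "open U" and c: "continuous_on U g" and x0: "x0 \<in> U"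
  shows "g x0 = 0"
proof (rule ccontr)
  assume nz: "g x0 \<noteq> 0"
  have "isCont g x0" using c U x0 by (simp add: continuous_on_eq_continuous_at)
  then obtain e where e: "e > 0" "\<And>y. dist x0 y < e \<Longrightarrow> g y \<noteq> 0"
    using continuous_at_avoid[of x0 g 0] nz by auto
  obtain e' where e': "e' > 0" "ball x0 e' \<subseteq> U" using U x0 open_contains_ball by blast
  define d where "d = min e e'"
  have d: "d > 0" using e e' by (simp add: d_def)
  from ae obtain N where N: "{x \<in> space lborel. \<not> (x \<in> U \<longrightarrow> g x = 0)} \<subseteq> N" "emeasure lborel N = 0" "N \<in> sets lborel"
    by (rule AE_E)
  have sub: "{x0 - d<..<x0 + d} \<subseteq> N"
  proof
    fix y assume y: "y \<in> {x0 - d<..<x0 + d}"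
    then have "dist x0 y < d" by (auto simp: dist_real_def)
    then have "y \<in> U" "g y \<noteq> 0" using e e' by (auto simp: d_def)
    then show "y \<in> N" using N(1) by auto
  qed
  have "emeasure lborel {x0 - d<..<x0 + d} \<le> emeasure lborel N"
    by (rule emeasure_mono[OF sub N(3)])
  then show False using N(2) d by simp
qed

lemma exp_lip: "0 \<le> a \<Longrightarrow> 0 \<le> b \<Longrightarrow> \<bar>exp (- a) - exp (- b)\<bar> \<le> \<bar>a - (b::real)\<bar>"
proof -
  have main: "exp (- a) - exp (- b) \<le> b - a" if "0 \<le> a" "a \<le> b" for a b :: real
  proof -
    have eb: "exp (- b) = exp (- a) * exp (- (b - a))" by (simp flip: exp_add)
    have E: "1 - (b - a) \<le> exp (- (b - a))" using exp_ge_add_one_self[of "a - b"] by (simp only: minus_diff_eq)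
    have "exp (- a) * (1 - exp (- (b - a))) \<le> exp (- a) * (b - a)"
      by (rule mult_left_mono) (use E in auto)
    have ex1: "exp (- a) \<le> 1" using that by simp
    from \<open>exp (- a) * (1 - exp (- (b - a))) \<le> exp (- a) * (b - a)\<close>
    have "exp (- a) - exp (- b) \<le> exp (- a) * (b - a)" unfolding eb by (simp add: algebra_simps)
    also have "\<dots> \<le> 1 * (b - a)" using that \<open>exp (- a) \<le> 1\<close> by (intro mult_right_mono) auto
    finally show ?thesis by simp
  qed
  assume "0 \<le> a" "0 \<le> b"
  then show ?thesis
    using main[of a b] main[of b a] by (cases "a \<le> b") auto
qed

definition Lr :: "(real \<Rightarrow> real) \<Rightarrow> real \<Rightarrow> real" where
  "Lr P r = integral\<^sup>L lborel (\<lambda>x. indicator {0<..<1} x * (P x * exp (- (r * x))))"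

context
  fixes P :: "real \<Rightarrow> real" and C :: real
  assumes Pm[measurable]: "P \<in> borel_measurable borel"
    and Pb: "\<And>x. x \<in> {0<..<1} \<Longrightarrow> \<bar>P x\<bar> \<le> C"
begin


lemma C_nonneg: "0 \<le> C" using Pb[of "1/2"] by auto

lemma int_Lr: "0 \<le> r \<Longrightarrow> integrable lborel (\<lambda>x. indicator {0<..<1} x * (P x * exp (- (r * x))))"
proof (rule Bochner_Integration.integrable_bound)
  show "integrable lborel (\<lambda>x::real. indicator {0<..<1} x * C)"
    by (rule int_I_cont[of "\<lambda>x. C", OF continuous_on_const])
  show "(\<lambda>x. indicator {0<..<1} x * (P x * exp (- (r * x)))) \<in> borel_measurable lborel"
    by measurable
  assume r: "0 \<le> r"
  show "AE x in lborel. norm (indicator {0<..<1} x * (P x * exp (- (r * x)))) \<le> norm (indicator {0<..<1} x * C)"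
  proof (rule AE_I2)
    fix x :: real
    show "norm (indicator {0<..<1} x * (P x * exp (- (r * x)))) \<le> norm (indicator {0<..<1} x * C)"
    proof (cases "x \<in> {0<..<1}")
      case True
      have "\<bar>P x\<bar> * exp (- (r * x)) \<le> C * 1"
        using Pb[OF True] True r C_nonneg by (intro mult_mono) auto
      then show ?thesis using True C_nonneg by (simp add: abs_mult)
    qed simp
  qed
qed

lemma Lr_lip: "C-lipschitz_on {0..} (Lr P)"
proof (rule lipschitz_onI)
  show "0 \<le> C" by (rule C_nonneg)
  fix r r' :: real assume r: "r \<in> {0..}" and r': "r' \<in> {0..}"
  have eq1: "Lr P r - Lr P r' = integral\<^sup>L lborel (\<lambda>x. indicator {0<..<1} x * (P x * exp (- (r * x))) - indicator {0<..<1} x * (P x * exp (- (r' * x))))"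
    unfolding Lr_def using int_Lr r r' by (subst Bochner_Integration.integral_diff) auto
  have "\<bar>integral\<^sup>L lborel (\<lambda>x. indicator {0<..<1} x * (P x * exp (- (r * x))) - indicator {0<..<1} x * (P x * exp (- (r' * x))))\<bar> \<le> integral\<^sup>L lborel (\<lambda>x::real. indicator {0<..<1} x * (C * \<bar>r - r'\<bar>))"
  proof (rule integral_abs_bound_integral)
    show "integrable lborel (\<lambda>x. indicator {0<..<1} x * (P x * exp (- (r * x))) - indicator {0<..<1} x * (P x * exp (- (r' * x))))"
      using int_Lr r r' by auto
    show "integrable lborel (\<lambda>x::real. indicator {0<..<1} x * (C * \<bar>r - r'\<bar>))"
      by (rule int_I_cont[of "\<lambda>x. C * \<bar>r - r'\<bar>", OF continuous_on_const])
    fix x :: real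
    show "\<bar>indicator {0<..<1} x * (P x * exp (- (r * x))) - indicator {0<..<1} x * (P x * exp (- (r' * x)))\<bar> \<le> indicator {0<..<1} x * (C * \<bar>r - r'\<bar>)"
    proof (cases "x \<in> {0<..<1}")
      case True
      have "\<bar>exp (- (r * x)) - exp (- (r' * x))\<bar> \<le> \<bar>r * x - r' * x\<bar>"
        using True r r' by (intro exp_lip) auto
      also have "\<dots> = \<bar>r - r'\<bar> * x" using True by (simp add: abs_mult left_diff_distrib[symmetric])
      also have "\<dots> \<le> \<bar>r - r'\<bar>" using True by (simp add: mult_left_le)
      finally have "\<bar>exp (- (r * x)) - exp (- (r' * x))\<bar> \<le> \<bar>r - r'\<bar>" .
      then have "\<bar>P x\<bar> * \<bar>exp (- (r * x)) - exp (- (r' * x))\<bar> \<le> C * \<bar>r - r'\<bar>"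
        using Pb[OF True] by (intro mult_mono) auto
      then show ?thesis using True by (simp add: abs_mult right_diff_distrib[symmetric])
    qed simp
  qed
  also have "\<dots> = C * \<bar>r - r'\<bar>"
    by (simp add: mult.commute[of _ "C * _"])
  finally show "dist (Lr P r) (Lr P r') \<le> C * dist r r'" unfolding eq1 dist_real_def .
qed

lemma Lr_cont: "continuous_on {0<..} (Lr P)"
  using lipschitz_on_continuous_on[OF Lr_lip] by (rule continuous_on_subset) auto

end

lemma exp_int:
  assumes u: "0 < (u::real)"
  shows "integrable lborel (\<lambda>r. indicator {0<..} r * exp (- (r * u)))"
    and "integral\<^sup>L lborel (\<lambda>r. indicator {0<..} r * exp (- (r * u))) = 1 / u"
proof -
  show "integrable lborel (\<lambda>r. indicator {0<..} r * exp (- (r * u)))"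
    using integrable_I0i_exp_mscale[OF u] unfolding set_integrable_def by simp
  show "integral\<^sup>L lborel (\<lambda>r. indicator {0<..} r * exp (- (r * u))) = 1 / u"
    using LBINT_I0i_exp_mscale[OF u] unfolding interval_lebesgue_integral_0_infty set_lebesgue_integral_def by simp
qed

lemma sets_triple: "sets (lborel \<Otimes>\<^sub>M lborel :: ((real \<times> real) \<times> real) measure) = sets ((borel \<Otimes>\<^sub>M borel) \<Otimes>\<^sub>M borel)"
proof (intro sets_pair_measure_cong)
  have "sets (borel \<Otimes>\<^sub>M borel :: (real \<times> real) measure) = sets (borel :: (real \<times> real) measure)"
    by (subst borel_prod) simp
  then show "sets (lborel :: (real \<times> real) measure) = sets (borel \<Otimes>\<^sub>M borel)" by simp
qed simp

context
  fixes P :: "real \<Rightarrow> real" and C :: real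
  assumes Pm[measurable]: "P \<in> borel_measurable borel"
    and Pb: "\<And>x. x \<in> {0<..<1} \<Longrightarrow> \<bar>P x\<bar> \<le> C"
begin

lemma Q_eq:
  shows "integrable lborel (\<lambda>r. indicator {0<..} r * (Lr P r)^2)"
    and "integral\<^sup>L lborel (\<lambda>p::real\<times>real. indicator ({0<..<1} \<times> {0<..<1}) p * (P (fst p) * P (snd p) / (fst p + snd p)))
       = integral\<^sup>L lborel (\<lambda>r. indicator {0<..} r * (Lr P r)^2)"
proof -
  define S where "S = ({0<..<1::real} \<times> {0<..<1::real})"
  have [measurable]: "S \<in> sets (borel \<Otimes>\<^sub>M borel)"
    using sets_S by (simp add: borel_prod S_def)
  define h where "h = (\<lambda>(z::real\<times>real) (r::real). indicator S z * indicator {0<..} r * (P (fst z) * P (snd z) * exp (- (r * (fst z + snd z)))))"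
  have hm: "(\<lambda>(z,r). h z r) \<in> borel_measurable (lborel \<Otimes>\<^sub>M lborel)"
    unfolding measurable_cong_sets[OF sets_triple refl] h_def by measurable
  have inner: "(\<integral>r. h z r \<partial>lborel) = indicator S z * (P (fst z) * P (snd z) / (fst z + snd z))" for z
  proof (cases "z \<in> S")
    case True
    then have u: "0 < fst z + snd z" by (auto simp: S_def mem_Times_iff)
    have "(\<integral>r. h z r \<partial>lborel) = (\<integral>r. (P (fst z) * P (snd z)) * (indicator {0<..} r * exp (- (r * (fst z + snd z)))) \<partial>lborel)"
      unfolding h_def using True by (intro Bochner_Integration.integral_cong refl) (simp add: ac_simps)
    also have "\<dots> = (P (fst z) * P (snd z)) * (1 / (fst z + snd z))"
      using exp_int(2)[OF u] by simp
    finally show ?thesis using True by simp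
  qed (simp add: h_def)
  have inner_norm: "(\<integral>r. \<bar>h z r\<bar> \<partial>lborel) = indicator S z * (\<bar>P (fst z)\<bar> * \<bar>P (snd z)\<bar> / (fst z + snd z))" for z
  proof (cases "z \<in> S")
    case True
    then have u: "0 < fst z + snd z" by (auto simp: S_def mem_Times_iff)
    have "(\<integral>r. \<bar>h z r\<bar> \<partial>lborel) = (\<integral>r. (\<bar>P (fst z)\<bar> * \<bar>P (snd z)\<bar>) * (indicator {0<..} r * exp (- (r * (fst z + snd z)))) \<partial>lborel)"
      unfolding h_def using True by (intro Bochner_Integration.integral_cong refl) (simp add: abs_mult indicator_def)
    also have "\<dots> = (\<bar>P (fst z)\<bar> * \<bar>P (snd z)\<bar>) * (1 / (fst z + snd z))"
      using exp_int(2)[OF u] by simp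
    finally show ?thesis using True by simp
  qed (simp add: h_def)
  have hint: "integrable (lborel \<Otimes>\<^sub>M lborel) (\<lambda>(z,r). h z r)"
  proof (rule lborel_pair.Fubini_integrable)
    show "(\<lambda>(z,r). h z r) \<in> borel_measurable (lborel \<Otimes>\<^sub>M lborel)" by (rule hm)
    have "integrable lborel (\<lambda>z::real\<times>real. indicator S z * (\<bar>P (fst z)\<bar> * \<bar>P (snd z)\<bar> / (fst z + snd z)))"
      unfolding S_def by (rule integrable_kernel[where C=C and D=C]) (use Pb in auto)
    then show "integrable lborel (\<lambda>z. \<integral>r. norm ((\<lambda>(z,r). h z r) (z, r)) \<partial>lborel)"
      by (simp add: inner_norm)
    show "AE z in lborel. integrable lborel (\<lambda>r. (\<lambda>(z,r). h z r) (z, r))"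
    proof (rule AE_I2)
      fix z :: "real \<times> real"
      show "integrable lborel (\<lambda>r. (\<lambda>(z,r). h z r) (z, r))"
      proof (cases "z \<in> S")
        case True
        then have u: "0 < fst z + snd z" by (auto simp: S_def mem_Times_iff)
        have "integrable lborel (\<lambda>r. (P (fst z) * P (snd z)) * (indicator {0<..} r * exp (- (r * (fst z + snd z)))))"
          using exp_int(1)[OF u] by simp
        then show ?thesis unfolding h_def using True by (simp add: ac_simps)
      qed (simp add: h_def)
    qed
  qed
  have outer: "(\<integral>z. h z r \<partial>lborel) = indicator {0<..} r * (Lr P r)^2" for r
  proof (cases "0 < r")
    case True
    have "(\<integral>z. h z r \<partial>lborel) = (\<integral>z. (indicator {0<..<1} (fst z) * (P (fst z) * exp (- (r * fst z)))) * (indicator {0<..<1} (snd z) * (P (snd z) * exp (- (r * snd z)))) \<partial>lborel)"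
      unfolding h_def S_def using True
      by (intro Bochner_Integration.integral_cong refl) (simp add: indicator_def mem_Times_iff distrib_left exp_add[symmetric] algebra_simps)
    also have "\<dots> = Lr P r * Lr P r"
    proof -
      have i: "integrable lborel (\<lambda>x. indicator {0<..<1} x * (P x * exp (- (r * x))))"
        using int_Lr[OF Pm Pb] True by simp
      show ?thesis unfolding Lr_def by (rule prod_integral[OF i i])
    qed
    finally show ?thesis using True by (simp add: power2_eq_square)
  qed (simp add: h_def)
  have "integrable lborel (\<lambda>r. \<integral>z. h z r \<partial>lborel)"
    by (rule lborel_pair.integrable_snd[OF hint])
  then show "integrable lborel (\<lambda>r. indicator {0<..} r * (Lr P r)^2)"
    by (simp add: outer)
  have "(\<integral>r. (\<integral>z. h z r \<partial>lborel) \<partial>lborel) = (\<integral>z. (\<integral>r. h z r \<partial>lborel) \<partial>lborel)"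
    by (rule lborel_pair.Fubini_integral[OF hint])
  then show "integral\<^sup>L lborel (\<lambda>p::real\<times>real. indicator ({0<..<1} \<times> {0<..<1}) p * (P (fst p) * P (snd p) / (fst p + snd p)))
       = integral\<^sup>L lborel (\<lambda>r. indicator {0<..} r * (Lr P r)^2)"
    by (simp add: outer inner S_def)
qed

end

lemma cont_bound:
  fixes P :: "real \<Rightarrow> real"
  assumes "continuous_on {0..1} P"
  obtains C where "\<And>x. x \<in> {0..1} \<Longrightarrow> \<bar>P x\<bar> \<le> C"
proof -
  have "compact (P ` {0..1})" by (rule compact_continuous_image[OF assms compact_Icc])
  then have "bounded (P ` {0..1})" by (rule compact_imp_bounded)
  then obtain a where "\<forall>y\<in>P ` {0..1}. norm y \<le> a" unfolding bounded_iff by blast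
  then have "\<And>x. x \<in> {0..1} \<Longrightarrow> \<bar>P x\<bar> \<le> a" by auto
  then show ?thesis by (rule that)
qed

lemma exp_pow: "exp (- x) * exp (- x) ^ i = exp (- ((real i + 1) * x))"
proof -
  have "exp (- x) * exp (- x) ^ i = exp (- x) ^ Suc i" by simp
  also have "\<dots> = exp (of_nat (Suc i) * (- x))" by (rule exp_of_nat_mult[symmetric])
  finally show ?thesis by (simp add: algebra_simps)
qed

lemma weier_step:
  fixes P :: "real \<Rightarrow> real"
  assumes Pm[measurable]: "P \<in> borel_measurable borel" and Pc: "continuous_on {0..1} P"
    and L0: "\<And>m::nat. Lr P (real m + 1) = 0"
  shows "\<And>x. x \<in> {0<..<1} \<Longrightarrow> P x = 0"
proof -
  obtain C where C: "\<And>x. x \<in> {0..1} \<Longrightarrow> \<bar>P x\<bar> \<le> C" using cont_bound[OF Pc] by blast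
  have Cb: "\<And>x. x \<in> {0<..<1} \<Longrightarrow> \<bar>P x\<bar> \<le> C" using C by auto
  have C0: "0 \<le> C" using C[of 0] by auto
  define J where "J = integral\<^sup>L lborel (\<lambda>x. indicator {0<..<1} x * (P x * P x * exp (- x)))"
  have iJ: "integrable lborel (\<lambda>x. indicator {0<..<1} x * (P x * P x * exp (- x)))"
    by (rule int_I_cont) (intro continuous_intros Pc)
  have Jle: "J \<le> C * e" if e: "0 < e" for e
  proof -
    have Hc: "continuous_on {exp (-1)..1} (\<lambda>z. P (- ln z))"
    proof (rule continuous_on_compose2[OF Pc])
      show "continuous_on {exp (-1)..1} (\<lambda>z::real. - ln z)"
        by (intro continuous_intros) (auto simp: order_less_le_trans[OF exp_gt_zero])
      show "(\<lambda>z::real. - ln z) ` {exp (-1)..1} \<subseteq> {0..1}"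
      proof
        fix y assume "y \<in> (\<lambda>z::real. - ln z) ` {exp (-1)..1}"
        then obtain z where z: "z \<in> {exp (-1)..1}" "y = - ln z" by auto
        have zp: "0 < z" using z(1) order_less_le_trans[OF exp_gt_zero, of "-1" z] by auto
        have "ln z \<le> 0" using z(1) zp by auto
        moreover have "ln (exp (-1)) \<le> ln z" using z(1) zp by (subst ln_le_cancel_iff) auto
        ultimately show "y \<in> {0..1}" using z(2) by auto
      qed
    qed
    obtain g where g: "real_polynomial_function g" "\<And>z. z \<in> {exp (-1)..1} \<Longrightarrow> \<bar>P (- ln z) - g z\<bar> < e"
      using Stone_Weierstrass_real_polynomial_function[OF compact_Icc Hc e] by blast
    obtain a n where gs: "g = (\<lambda>z. \<Sum>i\<le>n. a i * z ^ i)"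
      using g(1) unfolding real_polynomial_function_iff_sum by blast
    have gc: "continuous_on {0..1} (\<lambda>x. P x * exp (- x) * g (exp (- x)))"
      unfolding gs by (intro continuous_intros Pc)
    have ig: "integrable lborel (\<lambda>x. indicator {0<..<1} x * (P x * exp (- x) * g (exp (- x))))"
      by (rule int_I_cont[OF gc])
    have iLi: "integrable lborel (\<lambda>x. indicator {0<..<1} x * (P x * exp (- ((real i + 1) * x))))" for i
      using int_Lr[OF Pm Cb, of "real i + 1"] by simp
    have g0: "integral\<^sup>L lborel (\<lambda>x. indicator {0<..<1} x * (P x * exp (- x) * g (exp (- x)))) = 0"
    proof -
      have "integral\<^sup>L lborel (\<lambda>x. indicator {0<..<1} x * (P x * exp (- x) * g (exp (- x))))
          = integral\<^sup>L lborel (\<lambda>x. \<Sum>i\<le>n. a i * (indicator {0<..<1} x * (P x * exp (- ((real i + 1) * x)))))"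
        unfolding gs
        by (intro Bochner_Integration.integral_cong refl)
           (simp only: exp_pow[symmetric], simp add: sum_distrib_left ac_simps)
      also have "\<dots> = (\<Sum>i\<le>n. a i * Lr P (real i + 1))"
        unfolding Lr_def using iLi by (subst Bochner_Integration.integral_sum) auto
      also have "\<dots> = 0" using L0 by simp
      finally show ?thesis .
    qed
    have "J = integral\<^sup>L lborel (\<lambda>x. indicator {0<..<1} x * (P x * P x * exp (- x)) - indicator {0<..<1} x * (P x * exp (- x) * g (exp (- x))))"
      unfolding J_def using iJ ig g0 by (subst Bochner_Integration.integral_diff) auto
    also have "\<dots> \<le> \<bar>\<dots>\<bar>" by simp
    also have "\<dots> \<le> integral\<^sup>L lborel (\<lambda>x::real. indicator {0<..<1} x * (C * e))"
    proof (rule integral_abs_bound_integral)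
      show "integrable lborel (\<lambda>x. indicator {0<..<1} x * (P x * P x * exp (- x)) - indicator {0<..<1} x * (P x * exp (- x) * g (exp (- x))))"
        using iJ ig by auto
      show "integrable lborel (\<lambda>x::real. indicator {0<..<1} x * (C * e))"
        by (rule int_I_cont[of "\<lambda>x. C * e", OF continuous_on_const])
      fix x :: real
      show "\<bar>indicator {0<..<1} x * (P x * P x * exp (- x)) - indicator {0<..<1} x * (P x * exp (- x) * g (exp (- x)))\<bar> \<le> indicator {0<..<1} x * (C * e)"
      proof (cases "x \<in> {0<..<1}")
        case True
        have ex: "exp (- x) \<in> {exp (-1)..1}" using True by auto
        have "\<bar>P x - g (exp (- x))\<bar> < e" using g(2)[OF ex] by simp
        then have "\<bar>P x\<bar> * exp (- x) * \<bar>P x - g (exp (- x))\<bar> \<le> C * 1 * e"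
          using Cb[OF True] True C0 by (intro mult_mono) auto
        moreover have "\<bar>P x * P x * exp (- x) - P x * exp (- x) * g (exp (- x))\<bar> = \<bar>P x\<bar> * exp (- x) * \<bar>P x - g (exp (- x))\<bar>"
      proof -
        have "P x * P x * exp (- x) - P x * exp (- x) * g (exp (- x)) = P x * exp (- x) * (P x - g (exp (- x)))"
          by (simp add: algebra_simps)
        then show ?thesis by (simp add: abs_mult)
      qed
        ultimately show ?thesis using True by simp
      qed simp
    qed
    also have "\<dots> = C * e" by (simp add: mult.commute[of _ "C * e"])
    finally show ?thesis .
  qed
  have "J \<le> 0"
  proof (rule field_le_epsilon)
    fix e :: real assume e: "0 < e"
    have "J \<le> C * (e / (C + 1))" using Jle[of "e / (C + 1)"] e C0 by auto
    also have "\<dots> \<le> e" using C0 e by (simp add: divide_simps)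
    finally show "J \<le> 0 + e" by simp
  qed
  moreover have "0 \<le> J" unfolding J_def
    by (intro integral_nonneg_AE AE_I2) (auto simp: indicator_def)
  ultimately have "J = 0" by simp
  then have "AE x in lborel. indicator {0<..<1} x * (P x * P x * exp (- x)) = 0"
    unfolding J_def using iJ by (subst (asm) integral_nonneg_eq_0_iff_AE) (auto simp: indicator_def)
  then have ae: "AE x in lborel. x \<in> {0<..<1} \<longrightarrow> P x * P x * exp (- x) = 0"
    by (rule AE_mp) (intro AE_I2, auto simp: indicator_def)
  fix x :: real assume x: "x \<in> {0<..<1}"
  have "P x * P x * exp (- x) = 0"
    by (rule ae_cont_zero[OF ae _ _ x]) (auto intro!: continuous_intros continuous_on_subset[OF Pc])
  then show "P x = 0" by simp
qed

lemma KAL: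
  fixes P :: "real \<Rightarrow> real"
  assumes Pm[measurable]: "P \<in> borel_measurable borel" and Pc: "continuous_on {0..1} P"
    and Q0: "integral\<^sup>L lborel (\<lambda>p::real\<times>real. indicator ({0<..<1} \<times> {0<..<1}) p * (P (fst p) * P (snd p) / (fst p + snd p))) = 0"
  shows "\<And>x. x \<in> {0<..<1} \<Longrightarrow> P x = 0"
proof -
  obtain C where C: "\<And>x. x \<in> {0..1} \<Longrightarrow> \<bar>P x\<bar> \<le> C" using cont_bound[OF Pc] by blast
  have Cb: "\<And>x. x \<in> {0<..<1} \<Longrightarrow> \<bar>P x\<bar> \<le> C" using C by auto
  have int: "integrable lborel (\<lambda>r. indicator {0<..} r * (Lr P r)^2)" by (rule Q_eq(1)[OF Pm Cb])
  have "integral\<^sup>L lborel (\<lambda>r. indicator {0<..} r * (Lr P r)^2) = 0" using Q_eq(2)[OF Pm Cb] Q0 by simp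
  then have "AE r in lborel. indicator {0<..} r * (Lr P r)^2 = 0"
    using int by (subst (asm) integral_nonneg_eq_0_iff_AE) (auto simp: indicator_def)
  then have ae: "AE r in lborel. r \<in> {0<..} \<longrightarrow> (Lr P r)^2 = 0"
    by (rule AE_mp) (intro AE_I2, auto simp: indicator_def)
  have L0: "Lr P (real m + 1) = 0" for m :: nat
  proof -
    have "(Lr P (real m + 1))^2 = 0"
      by (rule ae_cont_zero[OF ae]) (auto intro!: continuous_on_power Lr_cont[OF Pm Cb])
    then show ?thesis by simp
  qed
  show "\<And>x. x \<in> {0<..<1} \<Longrightarrow> P x = 0" by (rule weier_step[OF Pm Pc L0])
qed

lemma quad:
  fixes v :: "nat \<Rightarrow> real" and k s t :: nat
  defines "Pv \<equiv> (\<lambda>x::real. \<Sum>i<k. v i * (x ^ (s + i) * ((1 - x) / (1 + x)) ^ t))"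
  shows "(\<Sum>i<k. \<Sum>j<k. v i * v j * mmom s t i j) =
    integral\<^sup>L lborel (\<lambda>p::real\<times>real. indicator ({0<..<1} \<times> {0<..<1}) p * (Pv (fst p) * Pv (snd p) / (fst p + snd p)))"
proof -
  define u where "u = (\<lambda>i (x::real). x ^ (s + i) * ((1 - x) / (1 + x)) ^ t)"
  define F where "F = (\<lambda>i j (p::real\<times>real). indicator ({0<..<1} \<times> {0<..<1}) p * (u i (fst p) * u j (snd p) / (fst p + snd p)))"
  have um: "u i \<in> borel_measurable borel" for i unfolding u_def by measurable
  have ub: "\<bar>u i x\<bar> \<le> 1" if "x \<in> {0<..<1}" for i x
  proof -
    have "\<bar>u i x\<bar> = x ^ (s + i) * ((1 - x) / (1 + x)) ^ t" using that unfolding u_def by (auto simp: abs_mult)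
    also have "\<dots> \<le> 1 * 1" using that
      by (intro mult_mono power_le_one) (auto simp: divide_simps)
    finally show ?thesis by simp
  qed
  have iF: "integrable lborel (F i j)" for i j
    unfolding F_def by (rule integrable_kernel[where C=1 and D=1, OF um um ub ub])
  have mF: "mmom s t i j = integral\<^sup>L lborel (F i j)" for i j
    unfolding mmom_def set_lebesgue_integral_def F_def u_def
    by (intro Bochner_Integration.integral_cong refl) (simp add: field_simps)
  have "(\<Sum>i<k. \<Sum>j<k. v i * v j * mmom s t i j) = (\<Sum>i<k. \<Sum>j<k. integral\<^sup>L lborel (\<lambda>p. v i * v j * F i j p))"
    unfolding mF by simp
  also have "\<dots> = (\<Sum>i<k. integral\<^sup>L lborel (\<lambda>p. \<Sum>j<k. v i * v j * F i j p))"
    using iF by (subst Bochner_Integration.integral_sum) auto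
  also have "\<dots> = integral\<^sup>L lborel (\<lambda>p. \<Sum>i<k. \<Sum>j<k. v i * v j * F i j p)"
    using iF by (subst Bochner_Integration.integral_sum) auto
  also have "\<dots> = integral\<^sup>L lborel (\<lambda>p::real\<times>real. indicator ({0<..<1} \<times> {0<..<1}) p * (Pv (fst p) * Pv (snd p) / (fst p + snd p)))"
  proof (intro Bochner_Integration.integral_cong refl)
    fix p :: "real \<times> real"
    have "Pv (fst p) * Pv (snd p) = (\<Sum>i<k. \<Sum>j<k. (v i * u i (fst p)) * (v j * u j (snd p)))"
      unfolding Pv_def u_def by (rule sum_product)
    then show "(\<Sum>i<k. \<Sum>j<k. v i * v j * F i j p) = indicator ({0<..<1} \<times> {0<..<1}) p * (Pv (fst p) * Pv (snd p) / (fst p + snd p))"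
      unfolding F_def by (simp add: sum_distrib_left sum_divide_distrib ac_simps)
  qed
  finally show ?thesis .
qed

lemma tau_nz: "tau s t k \<noteq> 0"
proof
  assume t0: "tau s t k = 0"
  define A where "A = Matrix.mat k k (\<lambda>(i,j). mmom s t i j)"
  have Ac: "A \<in> carrier_mat k k" unfolding A_def by simp
  obtain vv where vv: "vv \<in> carrier_vec k" "vv \<noteq> 0\<^sub>v k" "A *\<^sub>v vv = 0\<^sub>v k"
    using det_0_iff_vec_prod_zero_field[OF Ac] t0 unfolding tau_def A_def by blast
  define v where "v = (\<lambda>i. vv $ i)"
  have Av: "(\<Sum>j<k. mmom s t i j * v j) = 0" if i: "i < k" for i
  proof -
    have "(A *\<^sub>v vv) $ i = 0" using vv(3) i by simp
    moreover have "(A *\<^sub>v vv) $ i = (\<Sum>j\<in>{0..<k}. mmom s t i j * v j)"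
      using i vv(1) unfolding A_def v_def by (simp add: mult_mat_vec_def scalar_prod_def row_def)
    ultimately show ?thesis by (simp add: atLeast0LessThan)
  qed
  define Pv where "Pv = (\<lambda>x::real. \<Sum>i<k. v i * (x ^ (s + i) * ((1 - x) / (1 + x)) ^ t))"
  have "(\<Sum>i<k. \<Sum>j<k. v i * v j * mmom s t i j) = (\<Sum>i<k. v i * (\<Sum>j<k. mmom s t i j * v j))"
    by (simp add: sum_distrib_left ac_simps)
  also have "\<dots> = 0" using Av by simp
  finally have "integral\<^sup>L lborel (\<lambda>p::real\<times>real. indicator ({0<..<1} \<times> {0<..<1}) p * (Pv (fst p) * Pv (snd p) / (fst p + snd p))) = 0"
    unfolding Pv_def quad[symmetric] .
  moreover have "Pv \<in> borel_measurable borel" unfolding Pv_def by measurable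
  moreover have "continuous_on {0..1} Pv" unfolding Pv_def
    by (intro continuous_intros) (auto simp: add_nonneg_eq_0_iff)
  ultimately have P0: "\<And>x. x \<in> {0<..<1} \<Longrightarrow> Pv x = 0" using KAL by blast
  define c where "c = (\<lambda>i. if i < k then v i else 0)"
  have roots: "{0<..<1::real} \<subseteq> {x. (\<Sum>i\<le>k. c i * x ^ i) = 0}"
  proof
    fix x :: real assume x: "x \<in> {0<..<1}"
    have "Pv x = x ^ s * ((1 - x) / (1 + x)) ^ t * (\<Sum>i<k. v i * x ^ i)"
      unfolding Pv_def by (simp add: sum_distrib_left power_add ac_simps)
    then have e0: "x ^ s * ((1 - x) / (1 + x)) ^ t * (\<Sum>i<k. v i * x ^ i) = 0" using P0[OF x] by simp
    have "x ^ s * ((1 - x) / (1 + x)) ^ t \<noteq> 0" using x by auto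
    with e0 have "(\<Sum>i<k. v i * x ^ i) = 0" by (metis mult_eq_0_iff)
    moreover have "(\<Sum>i\<le>k. c i * x ^ i) = (\<Sum>i<k. v i * x ^ i)"
      unfolding c_def by (simp add: lessThan_Suc_atMost[symmetric])
    ultimately show "x \<in> {x. (\<Sum>i\<le>k. c i * x ^ i) = 0}" by simp
  qed
  have "infinite {x. (\<Sum>i\<le>k. c i * x ^ i) = (0::real)}"
  proof
    assume "finite {x. (\<Sum>i\<le>k. c i * x ^ i) = (0::real)}"
    then have "finite {0<..<1::real}" by (rule finite_subset[OF roots])
    moreover have "infinite {0<..<1::real}" by (rule infinite_Ioo) simp
    ultimately show False by simp
  qed
  then have call: "\<forall>i\<le>k. c i = 0" using polyfun_finite_roots[of c k] by auto
  have z: "vv $ i = 0" if i: "i < k" for i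
  proof -
    have "c i = 0" using call i by auto
    then have "v i = 0" using i by (simp add: c_def)
    then show ?thesis by (simp add: v_def)
  qed
  have "vv = 0\<^sub>v k"
    using vv(1) z by (intro eq_vecI) auto
  then show False using vv(2) by simp
qed


lemma colop:
  fixes f :: "nat \<Rightarrow> nat \<Rightarrow> real" and \<phi> l :: "nat \<Rightarrow> real"
  assumes p: "p < N" and fp: "\<And>i. i < N \<Longrightarrow> f i p = \<phi> i" and lp: "l p = 0"
  shows "Determinant.det (Matrix.mat N N (\<lambda>(i,j). f i j + l j * \<phi> i)) = Determinant.det (Matrix.mat N N (\<lambda>(i,j). f i j))"
proof -
  define B where "B = (\<lambda>m. Matrix.mat N N (\<lambda>(i,j). f i j + (if j < m then l j * \<phi> i else 0)))"
  have step: "Determinant.det (B (Suc m)) = Determinant.det (B m)" for m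
  proof (cases "m < N \<and> m \<noteq> p")
    case True
    have "B (Suc m) = addcol (l m) m p (B m)"
      unfolding B_def mat_addcol_def
      by (rule eq_matI) (use p fp lp True in \<open>auto simp: less_Suc_eq\<close>)
    then show ?thesis using True p by (simp add: B_def)
  next
    case False
    have "B (Suc m) = B m"
      unfolding B_def by (rule mat_cong_real) (use False lp in \<open>auto simp: less_Suc_eq\<close>)
    then show ?thesis by simp
  qed
  have "Determinant.det (B m) = Determinant.det (B 0)" for m
    by (induction m) (use step in auto)
  moreover have "B N = Matrix.mat N N (\<lambda>(i,j). f i j + l j * \<phi> i)"
    unfolding B_def by (rule mat_cong_real) auto
  moreover have "B 0 = Matrix.mat N N (\<lambda>(i,j). f i j)"
    unfolding B_def by (rule mat_cong_real) auto
  ultimately show ?thesis by metis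
qed


theorem proposition2p8:
  fixes s t n :: nat and x :: real
  assumes "n \<ge> 1" and "sigma s t (n - 1) \<noteq> 0"
  shows "Ppoly s (t + 1) n x = Rpoly s t n x - dcoef s t n * Ppoly s (t + 1) (n - 1) x"
proof -
  obtain k where n: "n = Suc k" using assms(1) by (cases n) auto
  define c where "c = (\<lambda>i j. mmom s (t+1) i j)"
  define \<phi> where "\<phi> = (\<lambda>i. phi s t i)"
  define X where "X = (\<lambda>i::nat. x ^ i)"
  define Dn where "Dn = (\<lambda>w. Determinant.det (Matrix.mat (Suc n) (Suc n) (\<lambda>(i,j). if j < n then c i j else w i)))"
  define Dm where "Dm = (\<lambda>w. Determinant.det (Matrix.mat n n (\<lambda>(i,j). if j < k then c i j else w i)))"
  define En where "En = (\<lambda>w. Determinant.det (Matrix.mat (Suc n) (Suc n) (\<lambda>(i,j). if j < n then (if j = 0 then \<phi> i else c i (j - 1)) else w i)))"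
  define T where "T = Determinant.det (Matrix.mat n n (\<lambda>(i,j). c i j))"
  have cdef: "c i j = mmom s t i j - \<phi> i * \<phi> j" for i j
    unfolding c_def \<phi>_def by (rule mmom_rec)
  have S1: "sigma s t (n-1) = Dm \<phi>"
  proof -
    have "Dm \<phi> = Determinant.det (Matrix.mat n n (\<lambda>(i,j). (if j < k then mmom s t i j else \<phi> i) + (if j < k then - \<phi> j else 0) * \<phi> i))"
      unfolding Dm_def by (intro arg_cong[where f=Determinant.det] mat_cong_real) (auto simp: cdef)
    also have "\<dots> = Determinant.det (Matrix.mat n n (\<lambda>(i,j). (if j < k then mmom s t i j else \<phi> i)))"
      by (rule colop[where p=k and f="\<lambda>i j. if j < k then mmom s t i j else \<phi> i" and l="\<lambda>j. if j < k then - \<phi> j else 0"]) (use n in auto)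
    also have "\<dots> = sigma s t (n-1)" unfolding sigma_def n \<phi>_def by simp
    finally show ?thesis by simp
  qed
  have S2: "sigma s t n = Dn \<phi>"
  proof -
    have "Dn \<phi> = Determinant.det (Matrix.mat (Suc n) (Suc n) (\<lambda>(i,j). (if j < n then mmom s t i j else \<phi> i) + (if j < n then - \<phi> j else 0) * \<phi> i))"
      unfolding Dn_def by (intro arg_cong[where f=Determinant.det] mat_cong_real) (auto simp: cdef)
    also have "\<dots> = Determinant.det (Matrix.mat (Suc n) (Suc n) (\<lambda>(i,j). (if j < n then mmom s t i j else \<phi> i)))"
      by (rule colop[where p=n and f="\<lambda>i j. if j < n then mmom s t i j else \<phi> i" and l="\<lambda>j. if j < n then - \<phi> j else 0"]) auto
    also have "\<dots> = sigma s t n" unfolding sigma_def \<phi>_def by simp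
    finally show ?thesis by simp
  qed
  have RE: "Rpoly s t n x = (-1)^k / Dm \<phi> * En X"
  proof -
    have "En X = Determinant.det (Matrix.mat (Suc n) (Suc n) (\<lambda>(i,j). (if j = 0 then \<phi> i else if j < n then mmom s t i (j - 1) else X i) + (if 0 < j \<and> j < n then - \<phi> (j - 1) else 0) * \<phi> i))"
      unfolding En_def by (intro arg_cong[where f=Determinant.det] mat_cong_real) (use n in \<open>auto simp: cdef\<close>)
    also have "\<dots> = Determinant.det (Matrix.mat (Suc n) (Suc n) (\<lambda>(i,j). (if j = 0 then \<phi> i else if j < n then mmom s t i (j - 1) else X i)))"
      by (rule colop[where p=0 and f="\<lambda>i j. if j = 0 then \<phi> i else if j < n then mmom s t i (j - 1) else X i" and l="\<lambda>j. if 0 < j \<and> j < n then - \<phi> (j - 1) else 0"]) auto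
    also have "\<dots> = Determinant.det (Matrix.mat (n+1) (n+1) (\<lambda>(i,j). (if j = 0 then phi s t i else if j < n then mmom s t i (j - 1) else x ^ i)))"
      unfolding \<phi>_def X_def by simp
    finally have "En X = Determinant.det (Matrix.mat (n+1) (n+1) (\<lambda>(i,j). (if j = 0 then phi s t i else if j < n then mmom s t i (j - 1) else x ^ i)))" .
    then show ?thesis unfolding Rpoly_def S1[symmetric] n by simp
  qed
  have PP: "Ppoly s (t+1) n x = Dn X / T"
    unfolding Ppoly_def Dn_def T_def tau_def c_def X_def by simp
  have PQ: "Ppoly s (t+1) (n-1) x = Dm X / tau s (t+1) k"
    unfolding Ppoly_def Dm_def c_def X_def n by simp
  have DC: "dcoef s t n = - (Dn \<phi> * tau s (t+1) k) / (Dm \<phi> * T)"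
    unfolding dcoef_def S1[symmetric] S2[symmetric] T_def tau_def c_def n by simp
  have nz1: "Dm \<phi> \<noteq> 0" using assms(2) S1 by simp
  have nz2: "T \<noteq> 0" using tau_nz[of s "t+1" n] unfolding T_def tau_def c_def by simp
  have nz3: "tau s (t+1) k \<noteq> 0" by (rule tau_nz)
  have PL: "Dm \<phi> * Dn X = (-1)^k * T * En X + Dn \<phi> * Dm X"
    unfolding Dm_def Dn_def En_def T_def
    by (rule pluecker[OF n]) (use nz1 in \<open>simp add: Dm_def\<close>)
  show ?thesis unfolding PP PQ DC RE
    using nz1 nz2 nz3 PL by (simp add: field_simps)
qed

end
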